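(* Let $\mathcal X$ be a finite multi-set of real symmetric $2\times2$ matrices with nonnegative eigenvalues satisfying the hypotheses of Lemma 7 (unique largest eigenvalue $\lambda_1$; unique second largest eigenvalue $\lambda_2$ whose eigenvector is not perpendicular to that of $\lambda_1$), and let $S=\mathrm{Sup}_{\mathrm{LE}}(\mathcal X)$. Then $S\in\mathcal U_p(\mathcal X)$ for every $p>0$.
   Context: $\mathrm{Sym}(2)$: real symmetric $2\times2$ matrices; $A\le_{\mathrm L}B$ means $B-A$ positive semidefinite; $\mathcal U(\mathcal X):=\{Y\in\mathrm{Sym}(2):X\le_{\mathrm L}Y\ \forall X\in\mathcal X\}$. $\mathrm{Sup}_{\mathrm{LE}}(\mathcal X):=\lim_{m\to\infty}\frac1m\log\sum_{X\in\mathcal X}\exp(mX)$. For a positive semidefinite $Y=\lambda uu^{\mathsf T}+\mu vv^{\mathsf T}$ (spectral form), $Y^p:=\lambda^puu^{\mathsf T}+\mu^pvv^{\mathsf T}$. For $\mathcal X$ with nonnegative eigenvalues, $\mathcal X^p:=\{X^p:X\in\mathcal X\}$ and the $p$-power upper bound cone is $\mathcal U_p(\mathcal X):=\{Y\in\mathrm{Sym}(2)\text{ positive semidefinite}:Y^p\in\mathcal U(\mathcal X^p)\}$. Eigenvalue conventions: the eigenvalues of $\mathcal X$ form the multi-set of both eigenvalues of every matrix; unique means occurring exactly once. *)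

theory Defs
  imports "HOL-Analysis.Analysis" "HOL-Library.Multiset"
begin

type_synonym mat2 = "real^2^2"

definition sym2 :: "mat2 \<Rightarrow> bool" where
  "sym2 A \<longleftrightarrow> transpose A = A"

definition outer :: "real^2 \<Rightarrow> real^2 \<Rightarrow> mat2" where
  "outer u v = (\<chi> i j. u$i * v$j)"

definition spectral :: "mat2 \<Rightarrow> real \<Rightarrow> real \<Rightarrow> real^2 \<Rightarrow> real^2 \<Rightarrow> bool" where
  "spectral A lam mu u v \<longleftrightarrow> norm u = 1 \<and> norm v = 1 \<and> u \<bullet> v = 0 \<and>
     A = lam *\<^sub>R outer u u + mu *\<^sub>R outer v v"

definition spec_fun :: "(real \<Rightarrow> real) \<Rightarrow> mat2 \<Rightarrow> mat2" where
  "spec_fun f A = (SOME B. \<exists>lam mu u v. spectral A lam mu u v \<and>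
        B = f lam *\<^sub>R outer u u + f mu *\<^sub>R outer v v)"

definition mexp :: "mat2 \<Rightarrow> mat2" where "mexp = spec_fun exp"
definition mlog :: "mat2 \<Rightarrow> mat2" where "mlog = spec_fun ln"
definition mpow :: "real \<Rightarrow> mat2 \<Rightarrow> mat2" where "mpow p = spec_fun (\<lambda>x. x powr p)"

definition eigs :: "mat2 \<Rightarrow> real multiset" where
  "eigs A = (SOME M. \<exists>lam mu u v. spectral A lam mu u v \<and> M = {#lam, mu#})"

definition eigs_all :: "mat2 multiset \<Rightarrow> real multiset" where
  "eigs_all \<X> = \<Sum>\<^sub># (image_mset eigs \<X>)"

definition is_eigvec :: "mat2 \<Rightarrow> real \<Rightarrow> real^2 \<Rightarrow> bool" where
  "is_eigvec A lam u \<longleftrightarrow> u \<noteq> 0 \<and> A *v u = lam *\<^sub>R u"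

definition psd :: "mat2 \<Rightarrow> bool" where
  "psd A \<longleftrightarrow> sym2 A \<and> (\<forall>x. 0 \<le> x \<bullet> (A *v x))"

definition loewner_le :: "mat2 \<Rightarrow> mat2 \<Rightarrow> bool" where
  "loewner_le A B \<longleftrightarrow> psd (B - A)"

definition upper_cone :: "mat2 multiset \<Rightarrow> mat2 set" where
  "upper_cone \<X> = {Y. sym2 Y \<and> (\<forall>X\<in>#\<X>. loewner_le X Y)}"

definition upper_cone_p :: "real \<Rightarrow> mat2 multiset \<Rightarrow> mat2 set" where
  "upper_cone_p p \<X> = {Y. psd Y \<and> mpow p Y \<in> upper_cone (image_mset (mpow p) \<X>)}"

definition sup_LE :: "mat2 multiset \<Rightarrow> mat2" where
  "sup_LE \<X> = lim (\<lambda>m::nat. (1 / real m) *\<^sub>R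
       mlog (\<Sum>\<^sub># (image_mset (\<lambda>X. mexp (real m *\<^sub>R X)) \<X>)))"

end

theory Submission
  imports Defs
begin

lemma vec2_eq: "(x::real^2) = y \<longleftrightarrow> x$1 = y$1 \<and> x$2 = y$2"
  by (simp add: vec_eq_iff forall_2)
lemma mat2_eq: "(A::mat2) = B \<longleftrightarrow> A$1$1 = B$1$1 \<and> A$1$2 = B$1$2 \<and> A$2$1 = B$2$1 \<and> A$2$2 = B$2$2"
  by (simp add: vec_eq_iff forall_2)
lemma inner2: "(x::real^2) \<bullet> y = x$1*y$1 + x$2*y$2"
  by (simp add: inner_vec_def sum_2)
lemma norm2_1: "norm (u::real^2) = 1 \<longleftrightarrow> (u$1)^2 + (u$2)^2 = 1"
  by (simp add: norm_eq_1 inner2 power2_eq_square)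
lemma outer_nth[simp]: "outer u v $ i $ j = u$i * v$j" by (simp add: outer_def)
lemma mv2: "((A::mat2) *v x)$i = A$i$1 * x$1 + A$i$2 * x$2"
  by (simp add: matrix_vector_mult_def sum_2)
lemma mat1_nth: "(mat 1 :: mat2)$i$j = (if i = j then 1 else 0)" by (simp add: mat_def)
lemma sym2_iff: "sym2 A \<longleftrightarrow> A$1$2 = A$2$1"
  by (auto simp: sym2_def mat2_eq transpose_def)

lemmas c2 = vec2_eq mat2_eq inner2 norm2_1 mv2 mat1_nth sym2_iff

lemma on2: fixes a b c d :: real
  assumes "a^2+b^2=1" "c^2+d^2=1" "a*c+b*d=0"
  shows "a^2+c^2=1 \<and> b^2+d^2=1 \<and> a*b+c*d=0"
proof -
  have k: "c = -(a*d-b*c)*b" "d = (a*d-b*c)*a"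
    using assms by algebra+
  have "(a*d-b*c)^2 = 1" using assms by algebra
  then show ?thesis using assms k by algebra
qed

definition tr2 :: "mat2 \<Rightarrow> real" where "tr2 A = A$1$1 + A$2$2"
definition det2 :: "mat2 \<Rightarrow> real" where "det2 A = A$1$1*A$2$2 - A$1$2*A$2$1"

lemma spectral_PQ: "spectral A l m u v \<Longrightarrow> outer u u + outer v v = mat 1"
  using on2[of "u$1" "u$2" "v$1" "v$2"]
  by (simp add: spectral_def c2 power2_eq_square algebra_simps)

lemma spectral_swap: "spectral A l m u v \<Longrightarrow> spectral A m l v u"
  by (auto simp: spectral_def inner_commute)

lemma spectral_sym2: "spectral A l m u v \<Longrightarrow> sym2 A"
  by (simp add: spectral_def c2 algebra_simps)

lemma spectral_trdet: assumes "spectral A l m u v"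
  shows "tr2 A = l + m" "det2 A = l * m"
proof -
  have o: "(u$1)^2 + (u$2)^2 = 1" "(v$1)^2 + (v$2)^2 = 1" "u$1 * v$1+u$2 * v$2 = 0"
    and A: "A$1$1 = l*(u$1)^2 + m*(v$1)^2" "A$2$2 = l*(u$2)^2 + m*(v$2)^2"
      "A$1$2 = l*u$1*u$2 + m * v$1 * v$2" "A$2$1 = l*u$1*u$2 + m * v$1 * v$2"
    using assms by (auto simp: spectral_def c2 power2_eq_square algebra_simps)
  show "tr2 A = l + m" unfolding tr2_def A using o on2[OF o] by algebra
  show "det2 A = l * m" unfolding det2_def A using o on2[OF o] by algebra
qed

lemma spectral_proj: assumes "spectral A l m u v"
  shows "(l - m) *\<^sub>R outer u u = A - m *\<^sub>R mat 1"
proof -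
  have "A = l *\<^sub>R outer u u + m *\<^sub>R outer v v" using assms by (simp add: spectral_def)
  also have "outer v v = mat 1 - outer u u" using spectral_PQ[OF assms] by (simp add: algebra_simps)
  finally show ?thesis by (simp add: algebra_simps)
qed

lemma spectral_unique_fun:
  assumes s1: "spectral A l m u v" and s2: "spectral A l' m' u' v'"
  shows "f l *\<^sub>R outer u u + f m *\<^sub>R outer v v = f l' *\<^sub>R outer u' u' + f m' *\<^sub>R outer v' v'"
proof -
  note t1 = spectral_trdet[OF s1] and t2 = spectral_trdet[OF s2]
  have mm: "m' = l + m - l'" using t1 t2 by simp
  have ll: "(l' - l) * (l' - m) = 0" using t1 t2 by algebra
  have Q1: "outer v v = mat 1 - outer u u" using spectral_PQ[OF s1] by (simp add: algebra_simps)
  have Q2: "outer v' v' = mat 1 - outer u' u'" using spectral_PQ[OF s2] by (simp add: algebra_simps)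
  note p1 = spectral_proj[OF s1] and p2 = spectral_proj[OF s2]
  show ?thesis
  proof (cases "l = m")
    case True
    then have "l' = l" "m' = l" using ll mm by auto
    then show ?thesis using True spectral_PQ[OF s1] spectral_PQ[OF s2]
      by (metis scaleR_add_right)
  next
    case False
    from ll have "l' = l \<or> l' = m" by auto
    then show ?thesis
    proof
      assume h: "l' = l"
      then have "m' = m" using mm by simp
      then have "(l - m) *\<^sub>R outer u u = (l - m) *\<^sub>R outer u' u'" using p1 p2 h by simp
      then have "outer u u = outer u' u'" using False by simp
      then show ?thesis using Q1 Q2 h \<open>m' = m\<close> by simp
    next
      assume h: "l' = m"
      then have "m' = l" using mm by simp
      have "(l - m) *\<^sub>R outer v v = (l - m) *\<^sub>R mat 1 - (l - m) *\<^sub>R outer u u"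
        using Q1 by (simp add: scaleR_diff_right)
      also have "\<dots> = l *\<^sub>R mat 1 - A" using p1 by (simp add: algebra_simps)
      also have "\<dots> = - ((m - l) *\<^sub>R outer u' u')" using p2 h \<open>m' = l\<close> by simp
      also have "\<dots> = (l - m) *\<^sub>R outer u' u'" by (simp add: algebra_simps)
      finally have "(l - m) *\<^sub>R outer v v = (l - m) *\<^sub>R outer u' u'" .
      then have e1: "outer u' u' = outer v v" using False by simp
      have e2: "outer v' v' = outer u u" using Q2 e1 Q1 by simp
      show ?thesis using e1 e2 h \<open>m' = l\<close> by (simp add: algebra_simps)
    qed
  qed
qed

lemma spec_fun_eq: assumes "spectral A l m u v"
  shows "spec_fun f A = f l *\<^sub>R outer u u + f m *\<^sub>R outer v v"
proof -
  have ex: "\<exists>B. \<exists>lam mu u v. spectral A lam mu u v \<and> B = f lam *\<^sub>R outer u u + f mu *\<^sub>R outer v v"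
    using assms by blast
  from someI_ex[OF ex] obtain l' m' u' v' where
    "spectral A l' m' u' v'" "spec_fun f A = f l' *\<^sub>R outer u' u' + f m' *\<^sub>R outer v' v'"
    unfolding spec_fun_def by blast
  then show ?thesis using spectral_unique_fun[OF assms] by metis
qed

lemma eigs_eq: assumes "spectral A l m u v" shows "eigs A = {#l, m#}"
proof -
  have ex: "\<exists>M. \<exists>lam mu u v. spectral A lam mu u v \<and> M = {#lam, mu#}"
    using assms by blast
  from someI_ex[OF ex] obtain l' m' u' v' where
    s2: "spectral A l' m' u' v'" and e: "eigs A = {#l', m'#}"
    unfolding eigs_def by blast
  note t1 = spectral_trdet[OF assms] and t2 = spectral_trdet[OF s2]
  have mm: "m' = l + m - l'" using t1 t2 by simp
  have ll: "(l' - l) * (l' - m) = 0" using t1 t2 by algebra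
  then have "l' = l \<or> l' = m" by auto
  then show ?thesis using e mm by (auto simp: add_mset_commute)
qed

definition lmx :: "mat2 \<Rightarrow> real" where
  "lmx A = (A$1$1 + A$2$2 + sqrt ((A$1$1 - A$2$2)^2 + 4*(A$1$2)^2)) / 2"
definition lmn :: "mat2 \<Rightarrow> real" where
  "lmn A = (A$1$1 + A$2$2 - sqrt ((A$1$1 - A$2$2)^2 + 4*(A$1$2)^2)) / 2"

lemma spectral_exists: assumes "sym2 A" shows "\<exists>u v. spectral A (lmx A) (lmn A) u v"
proof -
  define a b c where "a = A$1$1" "b = A$1$2" "c = A$2$2"
  have A21: "A$2$1 = b" using assms by (simp add: sym2_iff a_b_c_def)
  define r where "r = sqrt ((a - c)^2 + 4*b^2)"
  have r2: "r^2 = (a - c)^2 + 4*b^2" unfolding r_def by simp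
  have r0: "r \<ge> 0" unfolding r_def by simp
  have L: "lmx A = (a + c + r)/2" and M: "lmn A = (a + c - r)/2"
    by (simp_all add: lmx_def lmn_def a_b_c_def r_def)
  show ?thesis
  proof (cases "b = 0")
    case True
    have rr: "r = \<bar>a - c\<bar>" unfolding r_def using True by simp
    show ?thesis
    proof (cases "a \<ge> c")
      case True
      have "spectral A (lmx A) (lmn A) (vector [1,0]) (vector [0,1])"
        using True \<open>b = 0\<close> A21 unfolding L M rr
        by (simp add: spectral_def c2 a_b_c_def)
      then show ?thesis by blast
    next
      case False
      have "spectral A (lmx A) (lmn A) (vector [0,1]) (vector [1,0])"
        using False \<open>b = 0\<close> A21 unfolding L M rr
        by (simp add: spectral_def c2 a_b_c_def)
      then show ?thesis by blast
    qed
  next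
    case False
    define d where "d = (a + c + r)/2 - a"
    define N where "N = b^2 + d^2"
    have N0: "N > 0" using False unfolding N_def by (simp add: add_pos_nonneg)
    define s where "s = sqrt N"
    have s2: "s^2 = N" and s0: "s > 0" using N0 by (simp_all add: s_def)
    have sq: "(x/s)^2 = x^2/N" for x using s2 by (simp add: power_divide)
    have sq2: "(x/s)*(y/s) = x*y/N" for x y using s2 by (simp add: power2_eq_square)
    have e11: "a = (a + c + r)/2 * (b/s)^2 + (a + c - r)/2 * (d/s)^2"
    proof -
      have "a * N - ((a + c + r)/2 * b^2 + (a + c - r)/2 * d^2) = ((c - a + r)/8) * (r^2 - ((a - c)^2 + 4*b^2))"
        unfolding N_def d_def by (simp add: field_simps power2_eq_square)
      then have "a * N = (a + c + r)/2 * b^2 + (a + c - r)/2 * d^2" using r2 by simp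
      then show ?thesis using N0 unfolding sq by (metis (no_types, lifting) add_divide_distrib nonzero_mult_div_cancel_right order_less_irrefl times_divide_eq_right)
    qed
    have e22: "c = (a + c + r)/2 * (d/s)^2 + (a + c - r)/2 * (b/s)^2"
    proof -
      have "c * N - ((a + c + r)/2 * d^2 + (a + c - r)/2 * b^2) = (-(c - a + r)/8) * (r^2 - ((a - c)^2 + 4*b^2))"
        unfolding N_def d_def by (simp add: field_simps power2_eq_square)
      then have "c * N = (a + c + r)/2 * d^2 + (a + c - r)/2 * b^2" using r2 by simp
      then show ?thesis using N0 unfolding sq by (metis (no_types, lifting) add_divide_distrib nonzero_mult_div_cancel_right order_less_irrefl times_divide_eq_right)
    qed
    have e12: "b = (a + c + r)/2 * ((b/s) * (d/s)) + (a + c - r)/2 * ((-d/s) * (b/s))"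
    proof -
      have "b * N - ((a + c + r)/2 * (b * d) + (a + c - r)/2 * ((-d) * b)) = (-b/4) * (r^2 - ((a - c)^2 + 4*b^2))"
        unfolding N_def d_def by (simp add: field_simps power2_eq_square)
      then have "b * N = (a + c + r)/2 * (b * d) + (a + c - r)/2 * ((-d) * b)" using r2 by simp
      then show ?thesis using N0 unfolding sq2 by (metis (no_types, lifting) add_divide_distrib nonzero_mult_div_cancel_right order_less_irrefl times_divide_eq_right)
    qed
    have n1: "(b/s)^2 + (d/s)^2 = 1" using s2 s0 False by (simp add: power_divide N_def add_divide_distrib[symmetric])
    have n2: "(-d/s)^2 + (b/s)^2 = 1" using n1 by (simp add: power_divide)
    have "spectral A (lmx A) (lmn A) (vector [b/s, d/s]) (vector [-d/s, b/s])"
      unfolding spectral_def c2 L M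
      using n1 n2 e11 e22 e12 A21 by (simp add: a_b_c_def[symmetric] power2_eq_square algebra_simps)
    then show ?thesis by blast
  qed
qed

lemma lmn_le_lmx: "lmn A \<le> lmx A"
  unfolding lmx_def lmn_def by (simp add: divide_right_mono)

lemma lmx_lmn_trdet: assumes "sym2 A"
  shows "lmx A + lmn A = tr2 A" "lmx A * lmn A = det2 A"
proof -
  obtain u v where "spectral A (lmx A) (lmn A) u v" using spectral_exists[OF assms] by blast
  from spectral_trdet[OF this] show "lmx A + lmn A = tr2 A" "lmx A * lmn A = det2 A" by simp_all
qed

lemma lmx_scale: assumes "c > 0" shows "lmx (c *\<^sub>R A) = c * lmx A" "lmn (c *\<^sub>R A) = c * lmn A"
proof -
  have "sqrt ((c * A$1$1 - c * A$2$2)^2 + 4*(c * A$1$2)^2) = c * sqrt ((A$1$1 - A$2$2)^2 + 4*(A$1$2)^2)"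
  proof -
    have "(c * A$1$1 - c * A$2$2)^2 + 4*(c * A$1$2)^2 = c^2 * ((A$1$1 - A$2$2)^2 + 4*(A$1$2)^2)"
      by (simp add: power2_eq_square algebra_simps)
    then show ?thesis using assms by (simp add: real_sqrt_mult)
  qed
  then show "lmx (c *\<^sub>R A) = c * lmx A" "lmn (c *\<^sub>R A) = c * lmn A"
    unfolding lmx_def lmn_def by (simp_all add: algebra_simps add_divide_distrib diff_divide_distrib)
qed

lemma tendsto_lmx: assumes "(F \<longlongrightarrow> A) G"
  shows "((\<lambda>t. lmx (F t)) \<longlongrightarrow> lmx A) G" "((\<lambda>t. lmn (F t)) \<longlongrightarrow> lmn A) G"
  unfolding lmx_def lmn_def by (auto intro!: tendsto_intros assms)

lemma lmx_outer: assumes "norm u = 1" shows "lmx (outer u u) = 1" "lmn (outer u u) = 0"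
proof -
  have n: "(u$1)^2 + (u$2)^2 = 1" using assms by (simp add: norm2_1)
  have "((u$1)^2 - (u$2)^2)^2 + 4*(u$1 * u$2)^2 = ((u$1)^2 + (u$2)^2)^2"
    by (simp add: power2_eq_square algebra_simps)
  then have "sqrt (((u$1 * u$1) - (u$2 * u$2))^2 + 4*(u$1 * u$2)^2) = 1" using n
    by (simp add: power2_eq_square)
  then show "lmx (outer u u) = 1" "lmn (outer u u) = 0" unfolding lmx_def lmn_def
    using n by (simp_all add: power2_eq_square)
qed

lemma spec_fun_formula:
  assumes "sym2 A" "lmx A \<noteq> lmn A"
  shows "spec_fun f A = f (lmx A) *\<^sub>R ((1 / (lmx A - lmn A)) *\<^sub>R (A - lmn A *\<^sub>R mat 1))
     + f (lmn A) *\<^sub>R (mat 1 - (1 / (lmx A - lmn A)) *\<^sub>R (A - lmn A *\<^sub>R mat 1))"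
proof -
  obtain u v where s: "spectral A (lmx A) (lmn A) u v" using spectral_exists[OF assms(1)] by blast
  have P: "outer u u = (1 / (lmx A - lmn A)) *\<^sub>R (A - lmn A *\<^sub>R mat 1)"
  proof -
    have "outer u u = (1 / (lmx A - lmn A)) *\<^sub>R ((lmx A - lmn A) *\<^sub>R outer u u)"
      using assms(2) by simp
    then show ?thesis using spectral_proj[OF s] by simp
  qed
  have Q: "outer v v = mat 1 - outer u u" using spectral_PQ[OF s] by (simp add: algebra_simps)
  show ?thesis using spec_fun_eq[OF s] P Q by simp
qed

lemma div0: "((\<lambda>t::real. c / t) \<longlongrightarrow> 0) at_top"
  by (intro tendsto_divide_0[OF tendsto_const] filterlim_at_top_imp_at_infinity filterlim_ident)

lemma msum_nonneg: "(\<And>x. x \<in># M \<Longrightarrow> (0::real) \<le> f x) \<Longrightarrow> 0 \<le> (\<Sum>x\<in>#M. f x)"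
  using sum_mset_mono[of M "\<lambda>_. 0" f] by simp

lemma msum_ge_elem: assumes "a \<in># M" "\<And>x. x \<in># M \<Longrightarrow> (0::real) \<le> f x"
  shows "f a \<le> (\<Sum>x\<in>#M. f x)"
proof -
  have "M = add_mset a (M - {#a#})" using assms(1) by simp
  then have "(\<Sum>x\<in>#M. f x) = f a + (\<Sum>x\<in>#(M - {#a#}). f x)"
    by (metis sum_mset.insert image_mset_add_mset)
  moreover have "0 \<le> (\<Sum>x\<in>#(M - {#a#}). f x)"
    using assms(2) by (intro msum_nonneg) (meson in_diffD)
  ultimately show ?thesis by simp
qed

definition expsum :: "(real \<Rightarrow> real) \<Rightarrow> bool" where
  "expsum f \<longleftrightarrow> (\<exists>C. (\<forall>p\<in>#C. fst p \<ge> 0) \<and> (\<forall>t. f t = (\<Sum>p\<in>#C. fst p * exp (t * snd p))))"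

lemma expsum_add: "expsum f \<Longrightarrow> expsum g \<Longrightarrow> expsum (\<lambda>t. f t + g t)"
  unfolding expsum_def
proof (elim exE conjE)
  fix C D assume "\<forall>p\<in>#C. fst p \<ge> 0" "\<forall>t. f t = (\<Sum>p\<in>#C. fst p * exp (t * snd p))"
    "\<forall>p\<in>#D. fst p \<ge> 0" "\<forall>t. g t = (\<Sum>p\<in>#D. fst p * exp (t * snd p))"
  then show "\<exists>C. (\<forall>p\<in>#C. fst p \<ge> 0) \<and> (\<forall>t. f t + g t = (\<Sum>p\<in>#C. fst p * exp (t * snd p)))"
    by (intro exI[of _ "C + D"] conjI) (simp_all, blast)
qed

lemma expsum_msum: "(\<And>x. x \<in># T \<Longrightarrow> c x \<ge> 0) \<Longrightarrow> expsum (\<lambda>t. \<Sum>x\<in>#T. c x * exp (t * e x))"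
  unfolding expsum_def
  by (intro exI[of _ "image_mset (\<lambda>x. (c x, e x)) T"] conjI) (simp_all add: multiset.map_comp o_def)

lemma expsum_lim:
  assumes "expsum f" "f t0 > 0"
  shows "\<exists>R. ((\<lambda>t. ln (f t) / t) \<longlongrightarrow> R) at_top"
proof -
  obtain C where C0: "\<forall>p\<in>#C. fst p \<ge> 0" and Cf: "\<And>t. f t = (\<Sum>p\<in>#C. fst p * exp (t * snd p))"
    using assms(1) unfolding expsum_def by blast
  define C' where "C' = filter_mset (\<lambda>p. fst p > 0) C"
  have Cf': "f t = (\<Sum>p\<in>#C'. fst p * exp (t * snd p))" for t
  proof -
    have "(\<Sum>p\<in>#C. fst p * exp (t * snd p)) = (\<Sum>p\<in>#C'. fst p * exp (t * snd p))
          + (\<Sum>p\<in>#filter_mset (\<lambda>p. \<not> fst p > 0) C. fst p * exp (t * snd p))"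
    proof -
      have eq: "C = C' + filter_mset (\<lambda>p. \<not> fst p > 0) C" unfolding C'_def by (rule multiset_partition)
      show ?thesis by (subst eq) simp
    qed
    moreover have "(\<Sum>p\<in>#filter_mset (\<lambda>p. \<not> fst p > 0) C. fst p * exp (t * snd p)) = 0"
      using C0 by (intro sum_mset.neutral) auto
    ultimately show ?thesis using Cf by simp
  qed
  have "C' \<noteq> {#}" using assms(2) Cf'[of t0] by auto
  define R where "R = Max (snd ` set_mset C')"
  have fin: "finite (snd ` set_mset C')" by simp
  obtain p0 where p0: "p0 \<in># C'" "snd p0 = R"
    using Max_in[OF fin] \<open>C' \<noteq> {#}\<close> unfolding R_def by fastforce
  have c0: "fst p0 > 0" using p0 unfolding C'_def by simp
  have Rmax: "snd p \<le> R" if "p \<in># C'" for p unfolding R_def using that fin by auto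
  have pos: "fst p > 0" if "p \<in># C'" for p using that unfolding C'_def by simp
  define K where "K = (\<Sum>p\<in>#C'. fst p)"
  have K0: "K \<ge> fst p0" unfolding K_def using msum_ge_elem[OF p0(1), of fst] pos by fastforce
  have up: "f t \<le> K * exp (t * R)" if "t \<ge> 0" for t
  proof -
    have "f t \<le> (\<Sum>p\<in>#C'. fst p * exp (t * R))" unfolding Cf'
    proof (rule sum_mset_mono)
      fix p assume p: "p \<in># C'"
      have "t * snd p \<le> t * R" using Rmax[OF p] that by (rule mult_left_mono)
      then have "exp (t * snd p) \<le> exp (t * R)" by simp
      then show "fst p * exp (t * snd p) \<le> fst p * exp (t * R)"
        using pos[OF p] by (simp add: mult_left_mono)
    qed
    also have "\<dots> = K * exp (t * R)" unfolding K_def by (simp add: sum_mset_distrib_right)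
    finally show ?thesis .
  qed
  have lo: "fst p0 * exp (t * R) \<le> f t" for t
    unfolding Cf' using msum_ge_elem[OF p0(1), of "\<lambda>p. fst p * exp (t * snd p)"] pos p0(2)
    by fastforce
  have fp: "f t > 0" for t using lo[of t] c0
    by (meson exp_gt_zero mult_pos_pos order_less_le_trans)
  have ev1: "eventually (\<lambda>t. R + ln (fst p0) / t \<le> ln (f t) / t) at_top"
    using eventually_ge_at_top[of 1]
  proof eventually_elim
    case (elim t)
    have "ln (fst p0 * exp (t * R)) \<le> ln (f t)" using lo[of t] c0 fp[of t] by simp
    then have h: "ln (fst p0) + t * R \<le> ln (f t)" using c0 by (simp add: ln_mult)
    have "R + ln (fst p0) / t = (ln (fst p0) + t * R) / t" using elim by (simp add: field_simps)
    also have "\<dots> \<le> ln (f t) / t" using h elim by (simp add: divide_right_mono)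
    finally show ?case .
  qed
  have ev2: "eventually (\<lambda>t. ln (f t) / t \<le> R + ln K / t) at_top"
    using eventually_ge_at_top[of 1]
  proof eventually_elim
    case (elim t)
    have "ln (f t) \<le> ln (K * exp (t * R))" using up[of t] elim fp[of t] by simp
    then have h: "ln (f t) \<le> ln K + t * R" using c0 K0 by (simp add: ln_mult)
    have "R + ln K / t = (ln K + t * R) / t" using elim by (simp add: field_simps)
    moreover have "ln (f t) / t \<le> (ln K + t * R) / t" using h elim by (simp add: divide_right_mono)
    ultimately show ?case by simp
  qed
  have l1: "((\<lambda>t. R + ln (fst p0) / t) \<longlongrightarrow> R) at_top" using div0[of "ln (fst p0)"] by (metis add_0_right tendsto_add_const_iff)
  have l2: "((\<lambda>t. R + ln K / t) \<longlongrightarrow> R) at_top" using div0[of "ln K"] by (metis add_0_right tendsto_add_const_iff)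
  show ?thesis using tendsto_sandwich[OF ev1 ev2 l1 l2] by blast
qed

definition D2 :: "mat2 \<Rightarrow> mat2 \<Rightarrow> real" where
  "D2 M N = M$1$1 * N$2$2 + M$2$2 * N$1$1 - M$1$2 * N$2$1 - M$2$1 * N$1$2"
definition cross2 :: "real^2 \<Rightarrow> real^2 \<Rightarrow> real" where
  "cross2 z w = z$1 * w$2 - z$2 * w$1"
definition Bsum :: "(real \<times> (real^2)) multiset \<Rightarrow> real \<Rightarrow> mat2" where
  "Bsum T t = (\<Sum>p\<in>#T. exp (t * fst p) *\<^sub>R outer (snd p) (snd p))"
definition pe :: "mat2 \<Rightarrow> bool" where
  "pe M \<longleftrightarrow> M$1$2 = M$2$1 \<and> 0 \<le> M$1$1 \<and> 0 \<le> M$2$2 \<and> (M$1$2)^2 \<le> M$1$1 * M$2$2"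

lemma det2_add: "det2 (M + N) = det2 M + det2 N + D2 M N"
  by (simp add: det2_def D2_def algebra_simps)
lemma D2_sym: "D2 M N = D2 N M" by (simp add: D2_def algebra_simps)
lemma D2_add: "D2 (M + M') N = D2 M N + D2 M' N" by (simp add: D2_def algebra_simps)
lemma D2_zero: "D2 0 N = 0" by (simp add: D2_def)
lemma D2_scale: "D2 (c *\<^sub>R M) N = c * D2 M N" by (simp add: D2_def algebra_simps)
lemma D2_outer: "D2 (outer z z) (outer w w) = (cross2 z w)^2"
  by (simp add: D2_def cross2_def power2_eq_square algebra_simps)
lemma det2_zero: "det2 0 = 0" by (simp add: det2_def)
lemma det2_outer: "det2 (c *\<^sub>R outer z z) = 0" by (simp add: det2_def algebra_simps)

lemma D2_msum: "D2 (\<Sum>x\<in>#T. F x) N = (\<Sum>x\<in>#T. D2 (F x) N)"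
  by (induction T) (simp_all add: D2_zero D2_add)

lemma Bsum_empty: "Bsum {#} t = 0" by (simp add: Bsum_def)
lemma Bsum_add: "Bsum (add_mset p T) t = exp (t * fst p) *\<^sub>R outer (snd p) (snd p) + Bsum T t"
  by (simp add: Bsum_def)
lemma Bsum_union: "Bsum (T + U) t = Bsum T t + Bsum U t"
  by (simp add: Bsum_def)

lemma expsum_det: "expsum (\<lambda>t. det2 (Bsum T t))"
proof (induction T)
  case empty
  then show ?case using expsum_msum[of "{#}" "\<lambda>_. 0" "\<lambda>_. 0"] by (simp add: Bsum_empty det2_zero)
next
  case (add p T)
  have eq: "det2 (Bsum (add_mset p T) t) = det2 (Bsum T t)
      + (\<Sum>x\<in>#T. (cross2 (snd x) (snd p))^2 * exp (t * (fst p + fst x)))" for t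
  proof -
    have "det2 (Bsum (add_mset p T) t) = det2 (Bsum T t)
        + exp (t * fst p) * D2 (Bsum T t) (outer (snd p) (snd p))"
      unfolding Bsum_add det2_add det2_outer D2_scale by (simp add: D2_sym)
    also have "D2 (Bsum T t) (outer (snd p) (snd p)) = (\<Sum>x\<in>#T. exp (t * fst x) * (cross2 (snd x) (snd p))^2)"
      unfolding Bsum_def D2_msum D2_scale D2_outer ..
    finally show ?thesis
      by (simp add: sum_mset_distrib_left exp_add distrib_left mult_ac)
  qed
  show ?case unfolding eq
    by (intro expsum_add add.IH expsum_msum) simp
qed

lemma pe_det: "pe M \<Longrightarrow> 0 \<le> det2 M" by (auto simp: pe_def det2_def power2_eq_square)

lemma pe_D2: assumes "pe M" "pe N" shows "0 \<le> D2 M N"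
proof -
  define p q x P Q y where "p = M$1$1" "q = M$2$2" "x = M$1$2" "P = N$1$1" "Q = N$2$2" "y = N$1$2"
  have h: "0 \<le> p" "0 \<le> q" "x^2 \<le> p*q" "0 \<le> P" "0 \<le> Q" "y^2 \<le> P*Q"
    using assms unfolding pe_def p_q_x_P_Q_y_def by auto
  have D: "D2 M N = p*Q + q*P - 2*x*y"
    using assms unfolding pe_def D2_def p_q_x_P_Q_y_def by simp
  have a: "(x*y)^2 \<le> (p*Q)*(q*P)"
  proof -
    have "(x*y)^2 = x^2 * y^2" by (simp add: power_mult_distrib)
    also have "\<dots> \<le> (p*q)*(P*Q)" using h by (simp add: mult_mono)
    finally show ?thesis by (simp add: algebra_simps)
  qed
  have b: "4*((p*Q)*(q*P)) \<le> (p*Q + q*P)^2"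
    using sum_squares_ge_zero[of "p*Q - q*P" 0] by (simp add: power2_eq_square algebra_simps)
  have c: "(2*x*y)^2 \<le> (p*Q + q*P)^2"
  proof -
    have "(2*x*y)^2 = 4 * (x*y)^2" by (simp add: power2_eq_square)
    then show ?thesis using a b by linarith
  qed
  have "0 \<le> p*Q + q*P" using h by simp
  then have "\<bar>2*x*y\<bar> \<le> p*Q + q*P" using c by (metis abs_le_square_iff abs_of_nonneg)
  then show ?thesis unfolding D by simp
qed

lemma pe_add: assumes "pe M" "pe N" shows "pe (M + N)"
proof -
  have "0 \<le> det2 (M + N)" unfolding det2_add using pe_det[OF assms(1)] pe_det[OF assms(2)] pe_D2[OF assms] by simp
  then show ?thesis using assms unfolding pe_def det2_def by (simp add: power2_eq_square)
qed

lemma pe_zero: "pe 0" by (simp add: pe_def)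
lemma pe_outer: "0 \<le> c \<Longrightarrow> pe (c *\<^sub>R outer z z)"
  by (simp add: pe_def power2_eq_square algebra_simps)

lemma pe_Bsum: "pe (Bsum T t)"
  by (induction T) (simp_all add: Bsum_empty Bsum_add pe_zero pe_add pe_outer)

lemma pe_sym2: "pe M \<Longrightarrow> sym2 M" by (simp add: pe_def sym2_iff)

lemma det2_mono: "pe M \<Longrightarrow> pe N \<Longrightarrow> det2 M \<le> det2 (M + N)"
  using pe_det[of N] pe_D2[of M N] by (simp add: det2_add)

lemma det_Bsum_lower:
  assumes "{#p, q#} \<subseteq># T"
  shows "exp (t * (fst p + fst q)) * (cross2 (snd p) (snd q))^2 \<le> det2 (Bsum T t)"
proof -
  obtain U where U: "T = {#p, q#} + U" using assms by (metis subset_mset.le_iff_add)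
  have "Bsum T t = Bsum {#p, q#} t + Bsum U t" unfolding U Bsum_union ..
  then have "det2 (Bsum {#p, q#} t) \<le> det2 (Bsum T t)"
    using det2_mono[OF pe_Bsum pe_Bsum] by metis
  moreover have "det2 (Bsum {#p, q#} t) = exp (t * (fst p + fst q)) * (cross2 (snd p) (snd q))^2"
  proof -
    have "Bsum {#p, q#} t = exp (t * fst p) *\<^sub>R outer (snd p) (snd p) + exp (t * fst q) *\<^sub>R outer (snd q) (snd q)"
      by (simp add: Bsum_add Bsum_empty)
    then have "det2 (Bsum {#p, q#} t) = exp (t * fst p) * D2 (outer (snd p) (snd p)) (exp (t * fst q) *\<^sub>R outer (snd q) (snd q))"
      by (simp only: det2_add det2_outer D2_scale)
    also have "\<dots> = exp (t * fst p) * (exp (t * fst q) * (cross2 (snd q) (snd p))^2)"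
      by (simp only: D2_sym[of "outer (snd p) (snd p)"] D2_scale D2_outer)
    also have "\<dots> = exp (t * (fst p + fst q)) * (cross2 (snd p) (snd q))^2"
      by (simp add: exp_add distrib_left cross2_def power2_eq_square algebra_simps)
    finally show ?thesis .
  qed
  ultimately show ?thesis by simp
qed

lemma scaleR_msum: "c *\<^sub>R (\<Sum>x\<in>#M. f x) = (\<Sum>x\<in>#M. c *\<^sub>R (f x :: mat2))"
  by (induction M) (simp_all add: scaleR_add_right)

lemma exp_neg_lim: "(c::real) < 0 \<Longrightarrow> ((\<lambda>t. exp (t * c)) \<longlongrightarrow> 0) at_top"
proof -
  assume c: "c < 0"
  have "filterlim (\<lambda>t. c * t) at_bot at_top"
    by (rule filterlim_tendsto_neg_mult_at_bot[OF tendsto_const c filterlim_ident])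
  then have "filterlim (\<lambda>t. t * c) at_bot at_top" by (simp add: mult.commute)
  then show ?thesis using exp_at_bot filterlim_compose by blast
qed

lemma msum_lim0: "(\<forall>p\<in>#T. fst p < l) \<Longrightarrow>
  ((\<lambda>t. \<Sum>p\<in>#T. exp (t * (fst p - l)) *\<^sub>R outer (snd p) (snd p)) \<longlongrightarrow> (0::mat2)) at_top"
proof (induction T)
  case empty
  then show ?case by simp
next
  case (add p T)
  have "((\<lambda>t. exp (t * (fst p - l))) \<longlongrightarrow> 0) at_top" using add.prems by (intro exp_neg_lim) simp
  then have "((\<lambda>t. exp (t * (fst p - l)) *\<^sub>R outer (snd p) (snd p)) \<longlongrightarrow> 0 *\<^sub>R outer (snd p) (snd p)) at_top"
    by (intro tendsto_scaleR tendsto_const)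
  then have "((\<lambda>t. exp (t * (fst p - l)) *\<^sub>R outer (snd p) (snd p)
      + (\<Sum>p\<in>#T. exp (t * (fst p - l)) *\<^sub>R outer (snd p) (snd p))) \<longlongrightarrow> 0 + 0) at_top"
    using add by (intro tendsto_add) auto
  then show ?case by simp
qed

lemma core:
  fixes T :: "(real \<times> (real^2)) multiset"
  assumes top: "(l1, u1) \<in># T" "\<forall>p\<in>#T - {#(l1, u1)#}. fst p < l1"
    and nu1: "norm u1 = 1"
    and pair: "{#(l1, u1), q#} \<subseteq># T" "cross2 u1 (snd q) \<noteq> 0"
  shows "\<exists>s. ((\<lambda>t. (1/t) *\<^sub>R spec_fun ln (Bsum T t)) \<longlongrightarrow> l1 *\<^sub>R outer u1 u1 + s *\<^sub>R (mat 1 - outer u1 u1)) at_top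
    \<and> s \<le> l1 \<and> (\<forall>p. {#(l1, u1), p#} \<subseteq># T \<longrightarrow> cross2 u1 (snd p) \<noteq> 0 \<longrightarrow> fst p \<le> s)"
proof -
  define T' where "T' = T - {#(l1, u1)#}"
  have TT: "T = add_mset (l1, u1) T'" unfolding T'_def using top(1) by simp
  define B where "B t = Bsum T t" for t
  define n where "n t = exp (t * l1)" for t
  define E where "E = outer u1 u1"
  have npos: "n t > 0" for t unfolding n_def by simp
  have BNeq: "(1 / n t) *\<^sub>R B t = E + (\<Sum>p\<in>#T'. exp (t * (fst p - l1)) *\<^sub>R outer (snd p) (snd p))" for t
  proof -
    have "(1 / n t) *\<^sub>R B t = (\<Sum>p\<in>#T. (1 / n t) *\<^sub>R (exp (t * fst p) *\<^sub>R outer (snd p) (snd p)))"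
      unfolding B_def Bsum_def scaleR_msum ..
    also have "\<dots> = (\<Sum>p\<in>#T. exp (t * (fst p - l1)) *\<^sub>R outer (snd p) (snd p))"
      by (intro arg_cong[where f=sum_mset] image_mset_cong)
         (simp add: n_def exp_diff right_diff_distrib)
    also have "\<dots> = E + (\<Sum>p\<in>#T'. exp (t * (fst p - l1)) *\<^sub>R outer (snd p) (snd p))"
      unfolding TT E_def by simp
    finally show ?thesis .
  qed
  have BN: "((\<lambda>t. (1 / n t) *\<^sub>R B t) \<longlongrightarrow> E) at_top"
  proof -
    have "((\<lambda>t. E + (\<Sum>p\<in>#T'. exp (t * (fst p - l1)) *\<^sub>R outer (snd p) (snd p))) \<longlongrightarrow> E + 0) at_top"
      using msum_lim0[of T' l1] top(2) unfolding T'_def by (intro tendsto_add tendsto_const) auto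
    then show ?thesis unfolding BNeq by simp
  qed
  have symB: "sym2 (B t)" for t unfolding B_def by (rule pe_sym2[OF pe_Bsum])
  have LX: "((\<lambda>t. lmx (B t) / n t) \<longlongrightarrow> 1) at_top" and LN: "((\<lambda>t. lmn (B t) / n t) \<longlongrightarrow> 0) at_top"
  proof -
    have e1: "lmx ((1 / n t) *\<^sub>R B t) = lmx (B t) / n t" "lmn ((1 / n t) *\<^sub>R B t) = lmn (B t) / n t" for t
      using lmx_scale[of "1 / n t" "B t"] npos[of t] by simp_all
    show "((\<lambda>t. lmx (B t) / n t) \<longlongrightarrow> 1) at_top" "((\<lambda>t. lmn (B t) / n t) \<longlongrightarrow> 0) at_top"
      using tendsto_lmx[OF BN] lmx_outer[OF nu1] unfolding e1 E_def by simp_all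
  qed
  have detpos: "det2 (B t) > 0" for t
  proof -
    have "exp (t * (l1 + fst q)) * (cross2 u1 (snd q))^2 \<le> det2 (B t)"
      using det_Bsum_lower[OF pair(1), of t] unfolding B_def by simp
    moreover have "exp (t * (l1 + fst q)) * (cross2 u1 (snd q))^2 > 0" using pair(2) by simp
    ultimately show ?thesis by linarith
  qed
  have trd: "lmx (B t) * lmn (B t) = det2 (B t)" for t using lmx_lmn_trdet[OF symB] by simp
  have ev_big: "eventually (\<lambda>t. lmx (B t) / n t > 1/2 \<and> lmn (B t) / n t < 1/2) at_top"
    using order_tendstoD(1)[OF LX, of "1/2"] order_tendstoD(2)[OF LN, of "1/2"] eventually_conj by force
  have ev_pos: "eventually (\<lambda>t. lmx (B t) > 0 \<and> lmn (B t) > 0 \<and> lmx (B t) \<noteq> lmn (B t)) at_top"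
    using ev_big
  proof eventually_elim
    case (elim t)
    have "lmx (B t) / n t > 0" using elim by linarith
    then have "lmx (B t) > 0" using npos[of t] by (simp add: zero_less_divide_iff)
    moreover have "lmx (B t) \<noteq> lmn (B t)" using elim by auto
    moreover have "lmn (B t) > 0"
    proof -
      have "lmn (B t) = det2 (B t) / lmx (B t)" using trd[of t] \<open>lmx (B t) > 0\<close>
        by (metis nonzero_mult_div_cancel_left order_less_irrefl)
      then show ?thesis using detpos[of t] \<open>lmx (B t) > 0\<close> by simp
    qed
    ultimately show ?case by simp
  qed
  have LNX: "((\<lambda>t. ln (lmx (B t)) / t) \<longlongrightarrow> l1) at_top"
  proof -
    have "((\<lambda>t. ln (lmx (B t) / n t)) \<longlongrightarrow> ln 1) at_top" by (intro tendsto_ln LX) simp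
    then have "((\<lambda>t. ln (lmx (B t) / n t) / t) \<longlongrightarrow> 0) at_top"
      by (intro tendsto_divide_0 filterlim_at_top_imp_at_infinity filterlim_ident) simp
    then have lim: "((\<lambda>t. l1 + ln (lmx (B t) / n t) / t) \<longlongrightarrow> l1 + 0) at_top"
      by (intro tendsto_add tendsto_const)
    have "eventually (\<lambda>t. l1 + ln (lmx (B t) / n t) / t = ln (lmx (B t)) / t) at_top"
      using ev_pos eventually_gt_at_top[of 0]
    proof eventually_elim
      case (elim t)
      have "ln (lmx (B t) / n t) = ln (lmx (B t)) - t * l1"
        using elim by (simp add: ln_div npos n_def)
      then show ?case using elim by (simp add: field_simps)
    qed
    then show ?thesis using lim by (simp add: tendsto_cong)
  qed
  obtain \<sigma> where sig: "((\<lambda>t. ln (det2 (B t)) / t) \<longlongrightarrow> \<sigma>) at_top"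
    using expsum_lim[OF expsum_det[of T], of 0] detpos[of 0] unfolding B_def by blast
  define s where "s = \<sigma> - l1"
  have LNN: "((\<lambda>t. ln (lmn (B t)) / t) \<longlongrightarrow> s) at_top"
  proof -
    have lim: "((\<lambda>t. ln (det2 (B t)) / t - ln (lmx (B t)) / t) \<longlongrightarrow> \<sigma> - l1) at_top"
      by (intro tendsto_diff sig LNX)
    have "eventually (\<lambda>t. ln (det2 (B t)) / t - ln (lmx (B t)) / t = ln (lmn (B t)) / t) at_top"
      using ev_pos
    proof eventually_elim
      case (elim t)
      then show ?case unfolding trd[of t, symmetric] by (simp add: ln_mult add_divide_distrib)
    qed
    then show ?thesis using lim unfolding s_def by (simp add: tendsto_cong)
  qed
  define P where "P t = (1 / (lmx (B t) - lmn (B t))) *\<^sub>R (B t - lmn (B t) *\<^sub>R mat 1)" for t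
  have PL: "(P \<longlongrightarrow> E) at_top"
  proof -
    have lim: "((\<lambda>t. (1 / (lmx (B t) / n t - lmn (B t) / n t)) *\<^sub>R ((1 / n t) *\<^sub>R B t - (lmn (B t) / n t) *\<^sub>R mat 1))
        \<longlongrightarrow> (1 / (1 - 0)) *\<^sub>R (E - 0 *\<^sub>R mat 1)) at_top"
      by (intro tendsto_scaleR tendsto_divide tendsto_diff tendsto_const LX LN BN) simp
    have "eventually (\<lambda>t. (1 / (lmx (B t) / n t - lmn (B t) / n t)) *\<^sub>R ((1 / n t) *\<^sub>R B t - (lmn (B t) / n t) *\<^sub>R mat 1) = P t) at_top"
    proof (intro always_eventually allI)
      fix t
      have "1 / (lmx (B t) / n t - lmn (B t) / n t) = n t / (lmx (B t) - lmn (B t))"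
        using npos[of t] by (simp add: field_simps diff_divide_distrib[symmetric])
      moreover have "(1 / n t) *\<^sub>R B t - (lmn (B t) / n t) *\<^sub>R mat 1 = (1 / n t) *\<^sub>R (B t - lmn (B t) *\<^sub>R mat 1)"
        by (simp add: scaleR_diff_right)
      ultimately show "(1 / (lmx (B t) / n t - lmn (B t) / n t)) *\<^sub>R ((1 / n t) *\<^sub>R B t - (lmn (B t) / n t) *\<^sub>R mat 1) = P t"
        unfolding P_def using npos[of t] by simp
    qed
    then show ?thesis using lim by (simp add: tendsto_cong)
  qed
  have G: "((\<lambda>t. (1/t) *\<^sub>R spec_fun ln (Bsum T t)) \<longlongrightarrow> l1 *\<^sub>R E + s *\<^sub>R (mat 1 - E)) at_top"
  proof -
    have lim: "((\<lambda>t. (ln (lmx (B t)) / t) *\<^sub>R P t + (ln (lmn (B t)) / t) *\<^sub>R (mat 1 - P t))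
        \<longlongrightarrow> l1 *\<^sub>R E + s *\<^sub>R (mat 1 - E)) at_top"
      by (intro tendsto_add tendsto_scaleR tendsto_diff tendsto_const LNX LNN PL)
    have "eventually (\<lambda>t. (ln (lmx (B t)) / t) *\<^sub>R P t + (ln (lmn (B t)) / t) *\<^sub>R (mat 1 - P t)
        = (1/t) *\<^sub>R spec_fun ln (Bsum T t)) at_top"
      using ev_pos
    proof eventually_elim
      case (elim t)
      have "spec_fun ln (B t) = ln (lmx (B t)) *\<^sub>R P t + ln (lmn (B t)) *\<^sub>R (mat 1 - P t)"
        unfolding P_def using spec_fun_formula[OF symB, of t ln] elim by simp
      then show ?case unfolding B_def by (simp add: scaleR_add_right)
    qed
    then show ?thesis using lim by (simp add: tendsto_cong)
  qed
  have sle: "s \<le> l1"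
  proof (rule tendsto_le[OF _ LNX LNN])
    show "eventually (\<lambda>t. ln (lmn (B t)) / t \<le> ln (lmx (B t)) / t) at_top"
      using ev_pos eventually_gt_at_top[of 0]
    proof eventually_elim
      case (elim t)
      then show ?case using lmn_le_lmx[of "B t"] by (simp add: divide_right_mono)
    qed
  qed simp
  have sge: "fst p \<le> s" if p: "{#(l1, u1), p#} \<subseteq># T" "cross2 u1 (snd p) \<noteq> 0" for p
  proof -
    define c where "c = (cross2 u1 (snd p))^2"
    have c0: "c > 0" unfolding c_def using p(2) by simp
    have lo: "exp (t * (l1 + fst p)) * c \<le> det2 (B t)" for t
      using det_Bsum_lower[OF p(1), of t] unfolding B_def c_def by simp
    have lim: "((\<lambda>t. (l1 + fst p) + ln c / t) \<longlongrightarrow> (l1 + fst p) + 0) at_top"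
      using div0[of "ln c"] by (intro tendsto_add tendsto_const)
    have "l1 + fst p + 0 \<le> \<sigma>"
    proof (rule tendsto_le[OF _ sig lim])
      show "eventually (\<lambda>t. l1 + fst p + ln c / t \<le> ln (det2 (B t)) / t) at_top"
        using eventually_gt_at_top[of 0]
      proof eventually_elim
        case (elim t)
        have "ln (exp (t * (l1 + fst p)) * c) \<le> ln (det2 (B t))"
          using lo[of t] c0 detpos[of t] by simp
        then have h: "t * (l1 + fst p) + ln c \<le> ln (det2 (B t))" using c0 by (simp add: ln_mult)
        have "l1 + fst p + ln c / t = (t * (l1 + fst p) + ln c) / t" using elim by (simp add: field_simps)
        also have "\<dots> \<le> ln (det2 (B t)) / t" using h elim by (simp add: divide_right_mono)
        finally show ?case .
      qed
    qed simp
    then show ?thesis unfolding s_def by simp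
  qed
  show ?thesis using G sle sge unfolding E_def by blast
qed

lemma qf_outer: "x \<bullet> ((c *\<^sub>R outer u u) *v x) = c * (u \<bullet> x)^2"
  by (simp add: c2 power2_eq_square algebra_simps)
lemma qf_add: fixes M N :: mat2 shows "x \<bullet> ((M + N) *v x) = x \<bullet> (M *v x) + x \<bullet> (N *v x)"
  by (simp add: c2 algebra_simps)
lemma qf_diff: fixes M N :: mat2 shows "x \<bullet> ((M - N) *v x) = x \<bullet> (M *v x) - x \<bullet> (N *v x)"
  by (simp add: c2 algebra_simps)

lemma on_sum: fixes u v x :: "real^2" assumes "norm u = 1" "norm v = 1" "u \<bullet> v = 0"
  shows "(u \<bullet> x)^2 + (v \<bullet> x)^2 = x \<bullet> x"
proof -
  have h: "(u$1)^2 + (u$2)^2 = 1" "(v$1)^2 + (v$2)^2 = 1" "u$1 * v$1 + u$2 * v$2 = 0"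
    using assms by (simp_all add: c2)
  note o = on2[OF h]
  show ?thesis unfolding inner2 using h o by algebra
qed

lemma cross_on: assumes "norm u = 1" "norm v = 1" "u \<bullet> v = 0"
  shows "cross2 u v \<noteq> 0"
proof -
  have h: "(u$1)^2 + (u$2)^2 = 1" "(v$1)^2 + (v$2)^2 = 1" "u$1 * v$1 + u$2 * v$2 = 0"
    using assms by (simp_all add: c2)
  have "(cross2 u v)^2 = 1" unfolding cross2_def using h by algebra
  then show ?thesis by auto
qed

lemma cross0_par: assumes "norm z = 1" "norm u = 1" "cross2 z u = 0"
  shows "(u \<bullet> x)^2 = (z \<bullet> x)^2"
proof -
  have h: "(z$1)^2 + (z$2)^2 = 1" "(u$1)^2 + (u$2)^2 = 1" "z$1 * u$2 - z$2 * u$1 = 0"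
    using assms by (simp_all add: c2 cross2_def)
  define k where "k = z$1 * u$1 + z$2 * u$2"
  have k: "u$1 = k * z$1" "u$2 = k * z$2" unfolding k_def using h by algebra+
  have "k^2 = 1" using h k by algebra
  then show ?thesis unfolding inner2 k by algebra
qed

lemma sym2_comb: "sym2 (c *\<^sub>R outer u u + d *\<^sub>R outer v v)"
  by (simp add: sym2_iff algebra_simps)
lemma sym2_diff: "sym2 A \<Longrightarrow> sym2 B \<Longrightarrow> sym2 (A - B)"
  by (simp add: sym2_iff)

lemma final_psd:
  fixes p a b s l :: real
  assumes zw: "norm z = 1" "norm w = 1" "z \<bullet> w = 0"
    and uv: "norm u = 1" "norm v = 1" "u \<bullet> v = 0"
    and p: "p > 0" and ab: "0 \<le> a" "0 \<le> b" "a \<le> l" "b \<le> l" and s: "0 \<le> s" "s \<le> l"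
    and ca: "a \<le> s \<or> cross2 z u = 0" and cb: "b \<le> s \<or> cross2 z v = 0"
  shows "psd ((l powr p) *\<^sub>R outer z z + (s powr p) *\<^sub>R outer w w - ((a powr p) *\<^sub>R outer u u + (b powr p) *\<^sub>R outer v v))"
  unfolding psd_def
proof (intro conjI allI)
  show "sym2 ((l powr p) *\<^sub>R outer z z + (s powr p) *\<^sub>R outer w w - ((a powr p) *\<^sub>R outer u u + (b powr p) *\<^sub>R outer v v))"
    by (intro sym2_diff sym2_comb)
  fix x
  define L S A B where "L = l powr p" "S = s powr p" "A = a powr p" "B = b powr p"
  define Z W U V where "Z = (z \<bullet> x)^2" "W = (w \<bullet> x)^2" "U = (u \<bullet> x)^2" "V = (v \<bullet> x)^2"
  have q: "x \<bullet> (((l powr p) *\<^sub>R outer z z + (s powr p) *\<^sub>R outer w w - ((a powr p) *\<^sub>R outer u u + (b powr p) *\<^sub>R outer v v)) *v x)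
     = L * Z + S * W - A * U - B * V"
    unfolding qf_add qf_diff qf_outer L_S_A_B_def Z_W_U_V_def by simp
  have sum1: "Z + W = U + V" unfolding Z_W_U_V_def using on_sum[OF zw] on_sum[OF uv] by simp
  have nn: "0 \<le> Z" "0 \<le> W" "0 \<le> U" "0 \<le> V" unfolding Z_W_U_V_def by simp_all
  have mono: "x powr p \<le> y powr p" if "0 \<le> x" "x \<le> y" for x y using p that by (intro powr_mono2) auto
  have SL: "S \<le> L" unfolding L_S_A_B_def using mono s by simp
  have AL: "A \<le> L" "B \<le> L" unfolding L_S_A_B_def using mono ab by auto
  have S0: "0 \<le> S" unfolding L_S_A_B_def by simp
  have uvorth: "cross2 z u = 0 \<Longrightarrow> cross2 z v \<noteq> 0"
  proof
    assume h: "cross2 z u = 0" "cross2 z v = 0"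
    have "z$1 * u$2 - z$2 * u$1 = 0" "z$1 * v$2 - z$2 * v$1 = 0" "(z$1)^2 + (z$2)^2 = 1"
      using h zw by (simp_all add: cross2_def c2)
    then have "(u$1 * v$2 - u$2 * v$1) = 0" by algebra
    then show False using cross_on[OF uv] by (simp add: cross2_def)
  qed
  show "0 \<le> x \<bullet> (((l powr p) *\<^sub>R outer z z + (s powr p) *\<^sub>R outer w w - ((a powr p) *\<^sub>R outer u u + (b powr p) *\<^sub>R outer v v)) *v x)"
    unfolding q
  proof (cases "cross2 z u = 0")
    case True
    have bs: "b \<le> s" using cb uvorth[OF True] by auto
    have U: "U = Z" unfolding Z_W_U_V_def using cross0_par[OF zw(1) uv(1) True] by simp
    then have V: "V = W" using sum1 by simp
    have "B \<le> S" unfolding L_S_A_B_def using mono ab bs by simp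
    then have "0 \<le> (L - A) * Z + (S - B) * W" using AL nn by (intro add_nonneg_nonneg mult_nonneg_nonneg) auto
    then show "0 \<le> L * Z + S * W - A * U - B * V" unfolding U V by (simp add: algebra_simps)
  next
    case False
    have as: "a \<le> s" using ca False by auto
    have AS: "A \<le> S" unfolding L_S_A_B_def using mono ab as by simp
    show "0 \<le> L * Z + S * W - A * U - B * V"
    proof (cases "cross2 z v = 0")
      case True
      have V: "V = Z" unfolding Z_W_U_V_def using cross0_par[OF zw(1) uv(2) True] by simp
      then have U: "U = W" using sum1 by simp
      have "0 \<le> (L - B) * Z + (S - A) * W" using AL AS nn by (intro add_nonneg_nonneg mult_nonneg_nonneg) auto
      then show ?thesis unfolding U V by (simp add: algebra_simps)
    next
      case False
      have bs: "b \<le> s" using cb False by auto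
      have BS: "B \<le> S" unfolding L_S_A_B_def using mono ab bs by simp
      have "0 \<le> (L - S) * Z + (S - A) * U + (S - B) * V" using SL AS BS nn
        by (intro add_nonneg_nonneg mult_nonneg_nonneg) auto
      moreover have "(L - S) * Z + (S - A) * U + (S - B) * V = L * Z + S * W - A * U - B * V"
        using sum1 by (simp add: algebra_simps) (metis distrib_left add.commute)
      ultimately show ?thesis by simp
    qed
  qed
qed

lemma Bsum_msum: "Bsum (\<Sum>X\<in>#M. G X) t = (\<Sum>X\<in>#M. Bsum (G X) t)"
  by (induction M) (simp_all add: Bsum_empty Bsum_union)

lemma image_msum: "image_mset f (\<Sum>X\<in>#M. G X) = (\<Sum>X\<in>#M. image_mset f (G X))"
  by (induction M) simp_all

lemma msum_sub: "X \<in># M \<Longrightarrow> G X \<subseteq># (\<Sum>Y\<in>#M. G Y)"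
proof -
  assume "X \<in># M"
  then obtain M' where "M = add_mset X M'" by (metis mset_add)
  then show ?thesis by simp
qed

lemma spectral_scale: "spectral X a b u v \<Longrightarrow> spectral (t *\<^sub>R X) (t * a) (t * b) u v"
  by (simp add: spectral_def scaleR_add_right)

theorem lemma8:
  fixes \<X> :: "mat2 multiset" and lam1 lam2 :: real
  assumes sym: "\<forall>X\<in>#\<X>. sym2 X"
    and nonneg: "\<forall>X\<in>#\<X>. \<forall>x\<in>#eigs X. 0 \<le> x"
    and top1: "count (eigs_all \<X>) lam1 = 1" "\<forall>x\<in>#eigs_all \<X>. x \<le> lam1"
    and top2: "count (eigs_all \<X>) lam2 = 1" "lam2 \<noteq> lam1"
              "\<forall>x\<in>#eigs_all \<X>. x \<noteq> lam1 \<longrightarrow> x \<le> lam2"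
    and nonperp: "\<forall>X1\<in>#\<X>. \<forall>X2\<in>#\<X>. \<forall>u1 u2.
                    is_eigvec X1 lam1 u1 \<longrightarrow> is_eigvec X2 lam2 u2 \<longrightarrow> u1 \<bullet> u2 \<noteq> 0"
    and p: "p > 0"
  shows "sup_LE \<X> \<in> upper_cone_p p \<X>"
proof -
  have "\<forall>X. \<exists>q. sym2 X \<longrightarrow> spectral X (fst q) (fst (snd q)) (fst (snd (snd q))) (snd (snd (snd q)))"
    using spectral_exists by fastforce
  then obtain F where F: "\<And>X. sym2 X \<Longrightarrow> spectral X (fst (F X)) (fst (snd (F X))) (fst (snd (snd (F X)))) (snd (snd (snd (F X))))"
    by metis
  define fa where "fa X = fst (F X)" for X
  define fb where "fb X = fst (snd (F X))" for X
  define fu where "fu X = fst (snd (snd (F X)))" for X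
  define fv where "fv X = snd (snd (snd (F X)))" for X
  have sp: "spectral X (fa X) (fb X) (fu X) (fv X)" if "X \<in># \<X>" for X
    unfolding fa_def fb_def fu_def fv_def using F sym that by blast
  define pr where "pr X = {#(fa X, fu X), (fb X, fv X)#}" for X
  define T where "T = (\<Sum>X\<in>#\<X>. pr X)"
  have mexp_eq: "mexp (t *\<^sub>R X) = Bsum (pr X) t" if "X \<in># \<X>" for X t
    unfolding mexp_def spec_fun_eq[OF spectral_scale[OF sp[OF that]]]
    by (simp add: pr_def Bsum_add Bsum_empty mult.commute)
  have Bs: "(\<Sum>X\<in>#\<X>. mexp (t *\<^sub>R X)) = Bsum T t" for t
  proof -
    have "(\<Sum>X\<in>#\<X>. mexp (t *\<^sub>R X)) = (\<Sum>X\<in>#\<X>. Bsum (pr X) t)"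
      using mexp_eq by (intro arg_cong[where f=sum_mset] image_mset_cong) blast
    then show ?thesis unfolding T_def Bsum_msum by simp
  qed
  have eigsT: "eigs_all \<X> = image_mset fst T"
  proof -
    have "eigs_all \<X> = (\<Sum>X\<in>#\<X>. image_mset fst (pr X))"
      unfolding eigs_all_def pr_def
      by (intro arg_cong[where f=sum_mset] image_mset_cong) (simp add: eigs_eq[OF sp])
    then show ?thesis unfolding T_def image_msum by simp
  qed
  have prsub: "pr X \<subseteq># T" if "X \<in># \<X>" for X unfolding T_def using that by (rule msum_sub)
  have units: "norm (snd q) = 1" if "q \<in># T" for q
  proof -
    have "\<exists>M. M \<in># image_mset pr \<X> \<and> q \<in># M" using that unfolding T_def by (subst in_Union_mset_iff[symmetric])
    then obtain X where X: "X \<in># \<X>" "q \<in># pr X" by auto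
    then show ?thesis using sp[OF X(1)] unfolding pr_def spectral_def by auto
  qed
  have "lam1 \<in># image_mset fst T" using top1(1) unfolding eigsT by (metis count_eq_zero_iff zero_neq_one)
  then obtain z where z: "(lam1, z) \<in># T" by auto
  define T' where "T' = T - {#(lam1, z)#}"
  have T'lt: "fst q < lam1" if "q \<in># T'" for q
  proof -
    have qT: "q \<in># T" using that unfolding T'_def by (meson in_diffD)
    have "fst q \<le> lam1" using top1(2) qT unfolding eigsT by auto
    moreover have "fst q \<noteq> lam1"
    proof
      assume h: "fst q = lam1"
      have "image_mset fst T' = image_mset fst T - {#lam1#}"
        unfolding T'_def using z by (simp add: image_mset_Diff)
      then have "count (image_mset fst T') lam1 = 0" using top1(1) unfolding eigsT by simp
      moreover have "lam1 \<in># image_mset fst T'" using that h by force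
      ultimately show False by (simp add: count_eq_zero_iff)
    qed
    ultimately show ?thesis by simp
  qed
  have topu: "u = z" if "(lam1, u) \<in># T" for u
  proof (rule ccontr)
    assume "u \<noteq> z"
    then have "(lam1, u) \<in># T'" unfolding T'_def using that by (simp add: in_diff_count)
    then show False using T'lt by fastforce
  qed
  have pairT: "{#(lam1, z), q#} \<subseteq># T" if "q \<in># T" "fst q \<noteq> lam1" for q
  proof -
    have "q \<in># T - {#(lam1, z)#}" using that by (auto simp: in_diff_count)
    then show ?thesis using z by (simp add: insert_subset_eq_iff)
  qed
  have "\<exists>M. M \<in># image_mset pr \<X> \<and> (lam1, z) \<in># M" using z unfolding T_def by (subst in_Union_mset_iff[symmetric])
  then obtain X1 where X1: "X1 \<in># \<X>" "(lam1, z) \<in># pr X1" by auto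
  obtain b1 w where s1: "spectral X1 lam1 b1 z w" and pr1: "pr X1 = {#(lam1, z), (b1, w)#}"
  proof (cases "(fa X1, fu X1) = (lam1, z)")
    case True
    then show ?thesis using that[of "fb X1" "fv X1"] sp[OF X1(1)] unfolding pr_def by auto
  next
    case False
    then have "(fb X1, fv X1) = (lam1, z)" using X1(2) unfolding pr_def by auto
    then show ?thesis using that[of "fa X1" "fu X1"] spectral_swap[OF sp[OF X1(1)]] unfolding pr_def
      by (auto simp: add_mset_commute)
  qed
  have zw: "norm z = 1" "norm w = 1" "z \<bullet> w = 0" using s1 unfolding spectral_def by auto
  have b1T: "{#(lam1, z), (b1, w)#} \<subseteq># T" using prsub[OF X1(1)] pr1 by simp
  have crw: "cross2 z w \<noteq> 0" using cross_on[OF zw] .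
  obtain s where lim: "((\<lambda>t. (1/t) *\<^sub>R spec_fun ln (Bsum T t)) \<longlongrightarrow> lam1 *\<^sub>R outer z z + s *\<^sub>R (mat 1 - outer z z)) at_top"
    and sl: "s \<le> lam1" and sge: "\<And>q. {#(lam1, z), q#} \<subseteq># T \<Longrightarrow> cross2 z (snd q) \<noteq> 0 \<Longrightarrow> fst q \<le> s"
    using core[of lam1 z T "(b1, w)"] z T'lt zw(1) b1T crw unfolding T'_def by auto
  have sgeT: "fst q \<le> s" if "q \<in># T" "cross2 z (snd q) \<noteq> 0" for q
  proof (cases "fst q = lam1")
    case True
    then have "snd q = z" using topu[of "snd q"] that(1) by (metis prod.collapse)
    then have "cross2 z (snd q) = 0" by (simp add: cross2_def)
    then show ?thesis using that by simp
  next
    case False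
    show ?thesis using sge[OF pairT[OF that(1) False] that(2)] .
  qed
  define S where "S = lam1 *\<^sub>R outer z z + s *\<^sub>R outer w w"
  have Seq: "lam1 *\<^sub>R outer z z + s *\<^sub>R (mat 1 - outer z z) = S"
  proof -
    have "mat 1 - outer z z = outer w w" using spectral_PQ[OF s1] by (metis add_diff_cancel_left')
    then show ?thesis unfolding S_def by simp
  qed
  have supS: "sup_LE \<X> = S"
  proof -
    have "((\<lambda>m. (1 / real m) *\<^sub>R spec_fun ln (Bsum T (real m))) \<longlongrightarrow> S) sequentially"
      using filterlim_compose[OF lim filterlim_real_sequentially] unfolding Seq .
    then show ?thesis unfolding sup_LE_def mlog_def Bs by (rule limI)
  qed
  have e1: "eigs X1 = {#lam1, b1#}" using eigs_eq[OF s1] .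
  have b10: "0 \<le> b1" and l10: "0 \<le> lam1" using nonneg X1(1) e1 by auto
  have b1s: "b1 \<le> s" using sgeT[of "(b1, w)"] b1T crw by (auto simp: insert_subset_eq_iff dest: in_diffD)
  have s0: "0 \<le> s" using b10 b1s by simp
  have sS: "spectral S lam1 s z w" using zw unfolding S_def spectral_def by simp
  have mpS: "mpow p S = (lam1 powr p) *\<^sub>R outer z z + (s powr p) *\<^sub>R outer w w"
    unfolding mpow_def by (rule spec_fun_eq[OF sS])
  have psdS: "psd S"
    unfolding psd_def S_def
  proof (intro conjI allI)
    show "sym2 (lam1 *\<^sub>R outer z z + s *\<^sub>R outer w w)" by (rule sym2_comb)
    fix x show "0 \<le> x \<bullet> ((lam1 *\<^sub>R outer z z + s *\<^sub>R outer w w) *v x)"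
      unfolding qf_add qf_outer using l10 s0 by simp
  qed
  have cone: "mpow p S \<in> upper_cone (image_mset (mpow p) \<X>)"
    unfolding upper_cone_def
  proof (intro CollectI conjI ballI)
    show "sym2 (mpow p S)" unfolding mpS by (rule sym2_comb)
    fix Y assume "Y \<in># image_mset (mpow p) \<X>"
    then obtain X where X: "X \<in># \<X>" "Y = mpow p X" by auto
    note sX = sp[OF X(1)]
    have uv: "norm (fu X) = 1" "norm (fv X) = 1" "fu X \<bullet> fv X = 0" using sX unfolding spectral_def by auto
    have mpX: "mpow p X = (fa X powr p) *\<^sub>R outer (fu X) (fu X) + (fb X powr p) *\<^sub>R outer (fv X) (fv X)"
      unfolding mpow_def by (rule spec_fun_eq[OF sX])
    have inT: "(fa X, fu X) \<in># T" "(fb X, fv X) \<in># T" using prsub[OF X(1)] unfolding pr_def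
      by (auto dest: mset_subset_eqD)
    have eX: "eigs X = {#fa X, fb X#}" using eigs_eq[OF sX] .
    have ab0: "0 \<le> fa X" "0 \<le> fb X" using nonneg X(1) eX by auto
    have abl: "fa X \<le> lam1" "fb X \<le> lam1" using top1(2) inT unfolding eigsT by force+
    have ca: "fa X \<le> s \<or> cross2 z (fu X) = 0" using sgeT[OF inT(1)] by auto
    have cb: "fb X \<le> s \<or> cross2 z (fv X) = 0" using sgeT[OF inT(2)] by auto
    show "loewner_le Y (mpow p S)" unfolding loewner_le_def X(2) mpX mpS
      by (rule final_psd[OF zw uv p ab0 abl s0 sl ca cb])
  qed
  show ?thesis unfolding supS upper_cone_p_def using psdS cone by simp
qed

end
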